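(* Fix parameters $K,r_S,r_R,d_S,d_R>0$, $\alpha=\beta=1$, $\gamma>1$, $0<\varepsilon\le 0.5$, $D_0>0$, and dose bounds $D_{\min}=0\le D_{\max}\le D_0$ with $\bar D:=\gamma D_{\max}/D_0-1>0$. Fix $s_0,r_0>0$ with $s_0+r_0<1$, set $n_0=s_0+r_0$, and assume that for $D(t)\equiv 0$ one has $S'(0)>0$ and $R'(0)>0$. Consider the optimal control problem of maximizing $T$ over dose functions $D(\cdot)$ with $D_{\min}\le D(t)\le D_{\max}$, subject to $$\frac{\mathrm{d}S}{\mathrm{d}t}=r_S\Big(1-\frac{S+R}{K}\Big)\Big(1-\gamma\frac{D(t)}{D_0}\Big)S-d_SS,\qquad \frac{\mathrm{d}R}{\mathrm{d}t}=r_R\Big(1-\frac{S+R}{K}\Big)R-d_RR,$$ $N=S+R$, $S(0)=s_0K$, $R(0)=r_0K$, $N(T)=(1+\varepsilon)n_0K$ and $N(t)<(1+\varepsilon)n_0K$ for $t\in[0,T)$. Assume this problem has an optimal control that is piecewise constant with finitely many discontinuities, with optimal terminal time $T^*$ and optimal state $(S^*,R^* )$. Then there exists $T_0<T^*$ such that $r_RR^*(t)>\bar D\,r_SS^*(t)$ for every $t\in[T_0,T^*]$.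
   Context: $S,R$ are sensitive and resistant tumor cell burdens under dose $D(t)$; $T$ is the time of progression, when $N$ first reaches $(1+\varepsilon)n_0K$. *)

theory Defs
  imports "HOL-Analysis.Analysis"
begin

definition rhsS :: "real \<Rightarrow> real \<Rightarrow> real \<Rightarrow> real \<Rightarrow> real \<Rightarrow> real \<Rightarrow> real \<Rightarrow> real \<Rightarrow> real" where
  "rhsS K rS dS \<gamma> D0 d s r = rS * (1 - (s + r) / K) * (1 - \<gamma> * d / D0) * s - dS * s"

definition rhsR :: "real \<Rightarrow> real \<Rightarrow> real \<Rightarrow> real \<Rightarrow> real \<Rightarrow> real" where
  "rhsR K rR dR s r = rR * (1 - (s + r) / K) * r - dR * r"

definition admissible ::
  "real \<Rightarrow> real \<Rightarrow> real \<Rightarrow> real \<Rightarrow> real \<Rightarrow> real \<Rightarrow> real \<Rightarrow> real \<Rightarrow> real \<Rightarrow> real \<Rightarrow> real \<Rightarrow> real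
   \<Rightarrow> (real \<Rightarrow> real) \<Rightarrow> (real \<Rightarrow> real) \<Rightarrow> (real \<Rightarrow> real) \<Rightarrow> real \<Rightarrow> bool" where
  "admissible K rS rR dS dR \<gamma> \<epsilon> D0 Dmin Dmax s0 r0 D S R T \<longleftrightarrow>
     0 \<le> T \<and>
     (\<forall>t\<in>{0..T}. Dmin \<le> D t \<and> D t \<le> Dmax) \<and>
     continuous_on {0..T} S \<and> continuous_on {0..T} R \<and>
     (\<forall>t\<in>{0..T}.
        ((\<lambda>\<tau>. rhsS K rS dS \<gamma> D0 (D \<tau>) (S \<tau>) (R \<tau>)) has_integral (S t - s0 * K)) {0..t} \<and>
        ((\<lambda>\<tau>. rhsR K rR dR (S \<tau>) (R \<tau>)) has_integral (R t - r0 * K)) {0..t}) \<and>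
     S T + R T = (1 + \<epsilon>) * (s0 + r0) * K \<and>
     (\<forall>t\<in>{0..<T}. S t + R t < (1 + \<epsilon>) * (s0 + r0) * K)"

definition piecewise_constant_on :: "real \<Rightarrow> (real \<Rightarrow> real) \<Rightarrow> bool" where
  "piecewise_constant_on T D \<longleftrightarrow>
     (\<exists>F. finite F \<and> (\<forall>x y. 0 \<le> x \<and> x \<le> y \<and> y \<le> T \<and> {x..y} \<inter> F = {} \<longrightarrow> D x = D y))"

end

theory Submission
  imports Defs
begin


lemma tube_lemma:
  fixes h :: "real \<times> real \<Rightarrow> real"
  assumes cont: "continuous_on ({a..b} \<times> {0..1}) h" and ab: "a < b"
    and pos: "\<And>s. s \<in> {0..1} \<Longrightarrow> h (b, s) > 0"
  shows "\<exists>c. a \<le> c \<and> c < b \<and> (\<forall>t\<in>{c..b}. \<forall>s\<in>{0..1}. h (t, s) > 0)"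
proof -
  have uc: "uniformly_continuous_on ({a..b} \<times> {0..1}) h"
    by (rule compact_uniformly_continuous[OF cont]) (simp add: compact_Times)
  have c1: "continuous_on {0..1::real} (\<lambda>s. h (b, s))"
    by (rule continuous_on_compose2[OF cont]) (auto intro!: continuous_intros simp: less_imp_le ab)
  obtain s0 where s0: "s0 \<in> {0..1::real}" "\<And>s. s \<in> {0..1} \<Longrightarrow> h (b, s0) \<le> h (b, s)"
    using continuous_attains_inf[OF _ _ c1] by fastforce
  define m where "m = h (b, s0)"
  have m: "m > 0" using pos s0 m_def by auto
  obtain d where d: "d > 0" and dd: "\<And>x x'. x \<in> {a..b} \<times> {0..1} \<Longrightarrow> x' \<in> {a..b} \<times> {0..1} \<Longrightarrow> dist x' x < d \<Longrightarrow> dist (h x') (h x) < m"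
    using uc m unfolding uniformly_continuous_on_def by metis
  define c where "c = max a (b - d/2)"
  have "\<forall>t\<in>{c..b}. \<forall>s\<in>{0..1}. h (t, s) > 0"
  proof (intro ballI)
    fix t s assume t: "t \<in> {c..b}" and s: "s \<in> {0..1::real}"
    have "dist (t, s) (b, s) < d" using t d by (simp add: dist_Pair_Pair c_def dist_real_def)
    then have "dist (h (t,s)) (h (b,s)) < m"
      using dd[of "(b,s)" "(t,s)"] t s ab c_def by auto
    moreover have "h (b,s) \<ge> m" using s0 s m_def by auto
    ultimately show "h (t, s) > 0" by (simp add: dist_real_def)
  qed
  then show ?thesis using ab d by (intro exI[of _ c]) (auto simp: c_def)
qed

lemma left_nbhd:
  fixes f :: "real \<Rightarrow> real"
  assumes cont: "continuous_on {a..b} f" and ab: "a < b" and pos: "f b > 0"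
  shows "\<exists>c. a \<le> c \<and> c < b \<and> (\<forall>t\<in>{c..b}. f t > 0)"
proof -
  have "continuous_on ({a..b} \<times> {0..1::real}) (\<lambda>p. f (fst p))"
    by (rule continuous_on_compose2[OF cont]) (auto intro!: continuous_intros)
  from tube_lemma[OF this ab] pos show ?thesis by auto
qed

lemma isCont_pos_nbhd:
  fixes g :: "real \<Rightarrow> real"
  assumes "isCont g x" "g x > 0"
  shows "\<exists>d>0. \<forall>y. \<bar>y - x\<bar> < d \<longrightarrow> g y > 0"
proof -
  obtain d where "d > 0" "\<And>y. dist y x < d \<Longrightarrow> dist (g y) (g x) < g x"
    using assms unfolding continuous_at_eps_delta by metis
  then show ?thesis by (intro exI[of _ d]) (auto simp: dist_real_def abs_less_iff)
qed

lemma gronwall_back: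
  fixes u :: "real \<Rightarrow> real"
  assumes ab: "a \<le> b" and cont: "continuous_on {a..b} u"
    and nonneg: "\<And>t. t \<in> {a..b} \<Longrightarrow> 0 \<le> u t"
    and M: "0 \<le> M"
    and le: "\<And>t. t \<in> {a..b} \<Longrightarrow> u t \<le> M * integral {t..b} u"
  shows "\<And>t. t \<in> {a..b} \<Longrightarrow> u t = 0"
proof -
  define w where "w t = integral {a..b} u - integral {a..t} u" for t
  have int: "u integrable_on {a..b}" using cont integrable_continuous_real by blast
  have w_eq: "w t = integral {t..b} u" if "t \<in> {a..b}" for t
    using Henstock_Kurzweil_Integration.integral_combine[OF _ _ int, of t] that by (auto simp: w_def)
  have wnn: "w t \<ge> 0" if "t \<in> {a..b}" for t
    unfolding w_eq[OF that]
    by (rule integral_nonneg) (use that nonneg integrable_subinterval_real[OF int] in auto)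
  define v where "v t = w t * exp (M * t)" for t
  have dw: "(w has_real_derivative - u t) (at t within {a..b})" if "t \<in> {a..b}" for t
    unfolding w_def using integral_has_real_derivative[OF cont that]
    by (auto intro!: derivative_eq_intros)
  have dv: "(v has_real_derivative (- u t + M * w t) * exp (M * t)) (at t within {a..b})" if "t \<in> {a..b}" for t
    unfolding v_def using dw[OF that]
    by (auto intro!: derivative_eq_intros simp: algebra_simps)
  have vcont: "continuous_on {a..b} v"
    using dv by (meson DERIV_continuous continuous_on_eq_continuous_within)
  have vmono: "v t \<le> v b" if "t \<in> {a..b}" for t
  proof (rule DERIV_nonneg_imp_increasing_open[of t b v])
    show "t \<le> b" using that by auto
    show "continuous_on {t..b} v" using vcont that by (auto elim: continuous_on_subset)
    fix x assume x: "t < x" "x < b"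
    then have xi: "x \<in> interior {a..b}" using that by auto
    have "(v has_real_derivative (- u x + M * w x) * exp (M * x)) (at x)"
      using dv[of x] x that at_within_interior[OF xi] by auto
    moreover have "(- u x + M * w x) * exp (M * x) \<ge> 0"
      using le[of x] w_eq[of x] x that by auto
    ultimately show "\<exists>y. (v has_real_derivative y) (at x) \<and> 0 \<le> y" by blast
  qed
  have "w b = 0" unfolding w_def by simp
  fix t assume t: "t \<in> {a..b}"
  have "v t \<le> 0" using vmono[OF t] \<open>w b = 0\<close> by (simp add: v_def)
  then have "w t \<le> 0" unfolding v_def by (simp add: mult_le_0_iff)
  then have "w t = 0" using wnn[OF t] by auto
  then show "u t = 0" using le[OF t] w_eq[OF t] nonneg[OF t] by auto
qed


lemma first_cross:
  fixes X :: "real \<Rightarrow> real"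
  assumes cont: "continuous_on {0..T} X" and X0: "X 0 < c" and t': "t' \<in> {0..T}" "X t' \<ge> c"
  shows "\<exists>t0\<in>{0..t'}. X t0 = c \<and> 0 < t0 \<and> (\<forall>t\<in>{0..<t0}. X t < c)"
proof -
  have contt: "continuous_on {0..t'} X" using cont t' by (auto elim: continuous_on_subset)
  define Z where "Z = {t\<in>{0..t'}. X t = c}"
  have "Z \<noteq> {}" using IVT'[of X 0 c t', OF _ _ _ contt] X0 t' by (auto simp: Z_def)
  moreover have "compact Z"
  proof -
    have "closed Z" unfolding Z_def by (rule continuous_closed_preimage_constant[OF contt]) simp
    moreover have "bounded Z" by (rule bounded_subset[of "{0..t'}"]) (auto simp: Z_def)
    ultimately show ?thesis using compact_eq_bounded_closed by blast
  qed
  ultimately obtain t0 where t0: "t0 \<in> Z" "\<And>y. y \<in> Z \<Longrightarrow> t0 \<le> y"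
    using compact_attains_inf[of Z] by auto
  have "X t < c" if t: "t \<in> {0..<t0}" for t
  proof (rule ccontr)
    assume "\<not> X t < c"
    moreover have "continuous_on {0..t} X"
      by (rule continuous_on_subset[OF contt]) (use t t0 in \<open>auto simp: Z_def\<close>)
    ultimately obtain x where "0 \<le> x" "x \<le> t" "X x = c"
      using IVT'[of X 0 c t] X0 t by auto
    then have "x \<in> Z" using t t0 by (auto simp: Z_def)
    then show False using t0(2)[of x] t \<open>x \<le> t\<close> by auto
  qed
  moreover have "0 < t0" using t0 X0 by (cases "t0 = 0") (auto simp: Z_def)
  ultimately show ?thesis using t0 by (auto simp: Z_def)
qed

lemma subint:
  fixes f :: "real \<Rightarrow> real"
  assumes "(f has_integral F b - c0) {0..b}" "(f has_integral F a - c0) {0..a}" "0 \<le> a" "a \<le> b"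
  shows "(f has_integral F b - F a) {a..b}"
proof -
  have i: "f integrable_on {0..b}" using assms(1) by (rule has_integral_integrable)
  have "f integrable_on {a..b}" by (rule integrable_subinterval_real[OF i]) (use assms in auto)
  moreover have "integral {0..a} f + integral {a..b} f = integral {0..b} f"
    by (rule Henstock_Kurzweil_Integration.integral_combine[OF _ _ i]) (use assms in auto)
  moreover have "integral {0..a} f = F a - c0" "integral {0..b} f = F b - c0"
    using assms integral_unique by auto
  ultimately have "integral {a..b} f = F b - F a" by linarith
  then show ?thesis using \<open>f integrable_on {a..b}\<close> has_integral_integrable_integral[of f _ "{a..b}"] by simp
qed

lemma pos_sol:
  fixes X f :: "real \<Rightarrow> real"
  assumes cont: "continuous_on {0..T} X" and X0: "X 0 > 0"
    and int: "\<And>t. t \<in> {0..T} \<Longrightarrow> (f has_integral X t - X 0) {0..t}"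
    and lb: "\<And>\<tau>. \<tau> \<in> {0..T} \<Longrightarrow> X \<tau> \<ge> 0 \<Longrightarrow> f \<tau> \<ge> - M * X \<tau>"
    and M: "0 \<le> M"
  shows "\<And>t. t \<in> {0..T} \<Longrightarrow> X t > 0"
proof (rule ccontr)
  fix t' assume t': "t' \<in> {0..T}" "\<not> X t' > 0"
  have "continuous_on {0..T} (\<lambda>t. - X t)" using cont by (intro continuous_intros)
  from first_cross[OF this, of 0 t'] t' X0
  obtain t0 where t0: "t0 \<in> {0..t'}" "X t0 = 0" "0 < t0" "\<And>t. t \<in> {0..<t0} \<Longrightarrow> X t > 0"
    by auto
  have t0T: "t0 \<in> {0..T}" using t0 t' by auto
  have contt: "continuous_on {0..t0} X" using cont t0T by (auto elim: continuous_on_subset)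
  have nn: "0 \<le> X t" if "t \<in> {0..t0}" for t
  proof (cases "t = t0")
    case True then show ?thesis using t0(2) by simp
  next
    case False then have "t \<in> {0..<t0}" using that by auto
    then show ?thesis using t0(4) less_imp_le by blast
  qed
  have "X t = 0" if t: "t \<in> {0..t0}" for t
  proof (rule gronwall_back[OF _ contt nn M _ t])
    show "0 \<le> t0" using t0 by auto
    fix s assume s: "s \<in> {0..t0}"
    have sT: "s \<in> {0..T}" using s t0T by auto
    have fi: "(f has_integral X t0 - X s) {s..t0}"
      by (rule subint[OF int[OF t0T] int[OF sT]]) (use s in auto)
    have Xi: "((\<lambda>\<tau>. - M * X \<tau>) has_integral - M * integral {s..t0} X) {s..t0}"
    proof -
      have "X integrable_on {s..t0}"
        by (rule integrable_continuous_real, rule continuous_on_subset[OF contt]) (use s in auto)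
      then show ?thesis using has_integral_mult_right[of X "integral {s..t0} X" "{s..t0}" "- M"]
        by (simp add: has_integral_integrable_integral)
    qed
    have "- M * integral {s..t0} X \<le> X t0 - X s"
      by (rule has_integral_le[OF Xi fi]) (use s t0T nn lb in \<open>simp\<close>)
    then show "X s \<le> M * integral {s..t0} X" using t0 by auto
  qed
  then have "X 0 = 0" using t0 by auto
  then show False using X0 by auto
qed


locale tm =
  fixes K rS rR dS dR \<gamma> \<epsilon> D0 Dmax s0 r0 :: real
  assumes K: "K > 0" and rS: "rS > 0" and rR: "rR > 0" and dS: "dS > 0" and dR: "dR > 0"
    and gam: "\<gamma> > 1" and eps: "\<epsilon> > 0" and D0: "D0 > 0" and Dmax: "0 \<le> Dmax"
    and Db: "\<gamma> * Dmax / D0 - 1 > 0"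
    and s0: "s0 > 0" and r0: "r0 > 0" and n0: "s0 + r0 < 1"
begin

definition "fS D s r = rhsS K rS dS \<gamma> D0 D s r"
definition "fR s r = rhsR K rR dR s r"
definition F0 :: "real \<Rightarrow> real \<Rightarrow> real" where "F0 s r = rS*(1-(s+r)/K)* s - dS* s + (rR*(1-(s+r)/K)*r - dR*r)"
definition Fm :: "real \<Rightarrow> real \<Rightarrow> real" where "Fm s r = rS*(1-(s+r)/K)*(1 - \<gamma>*Dmax/D0)* s - dS* s + (rR*(1-(s+r)/K)*r - dR*r)"

definition solves :: "(real \<Rightarrow> real) \<Rightarrow> (real \<Rightarrow> real) \<Rightarrow> (real \<Rightarrow> real) \<Rightarrow> real \<Rightarrow> real \<Rightarrow> bool" where
  "solves D S R a b \<longleftrightarrow> continuous_on {a..b} S \<and> continuous_on {a..b} R \<and>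
     (\<forall>t\<in>{a..b}. ((\<lambda>\<tau>. fS (D \<tau>) (S \<tau>) (R \<tau>)) has_integral S t - S a) {a..t} \<and>
                 ((\<lambda>\<tau>. fR (S \<tau>) (R \<tau>)) has_integral R t - R a) {a..t}) \<and>
     (\<forall>t\<in>{a..b}. 0 \<le> D t \<and> D t \<le> Dmax)"

lemma fR_eq: "fR s r = rR*(1-(s+r)/K)*r - dR*r" by (simp add: fR_def rhsR_def)

lemma dose:
  assumes s: "s > 0" and n: "s + r < K"
    and lo: "Fm s r \<le> sp + fR s r" and hi: "sp + fR s r \<le> F0 s r"
  shows "0 \<le> D0/\<gamma>*(1 - (sp + dS* s)/(rS*(1-(s+r)/K)* s))"
    and "D0/\<gamma>*(1 - (sp + dS* s)/(rS*(1-(s+r)/K)* s)) \<le> Dmax"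
    and "fS (D0/\<gamma>*(1 - (sp + dS* s)/(rS*(1-(s+r)/K)* s))) s r = sp"
proof -
  define X where "X = rS*(1-(s+r)/K)* s"
  have "1 - (s+r)/K > 0" using n K by (simp add: field_simps)
  then have X: "X > 0" unfolding X_def using s rS by simp
  have hi': "sp + dS* s \<le> X" using hi unfolding F0_def fR_eq X_def by simp
  have lo': "(1 - \<gamma>*Dmax/D0) * X \<le> sp + dS* s" using lo unfolding Fm_def fR_eq X_def by (simp add: algebra_simps)
  have q1: "(sp + dS* s)/X \<le> 1" using hi' X by simp
  have q2: "1 - \<gamma>*Dmax/D0 \<le> (sp + dS* s)/X" using lo' X by (simp add: field_simps)
  have g0: "\<gamma> > 0" using gam by simp
  show "0 \<le> D0/\<gamma>*(1 - (sp + dS* s)/(rS*(1-(s+r)/K)* s))"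
    using q1 g0 D0 unfolding X_def[symmetric] by simp
  have "1 - (sp + dS* s)/X \<le> \<gamma>*Dmax/D0" using q2 by simp
  then have "D0/\<gamma>*(1 - (sp + dS* s)/X) \<le> D0/\<gamma>*(\<gamma>*Dmax/D0)"
    using g0 D0 by (intro mult_left_mono) auto
  also have "\<dots> = Dmax" using g0 D0 by simp
  finally show "D0/\<gamma>*(1 - (sp + dS* s)/(rS*(1-(s+r)/K)* s)) \<le> Dmax" unfolding X_def .
  have "fS (D0/\<gamma>*(1 - (sp + dS* s)/X)) s r = X * (1 - \<gamma> * (D0/\<gamma>*(1 - (sp + dS* s)/X)) / D0) - dS * s"
    unfolding fS_def rhsS_def X_def by (simp add: algebra_simps)
  also have "\<dots> = X * ((sp + dS* s)/X) - dS* s" using g0 D0 by simp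
  also have "\<dots> = sp" using X by simp
  finally show "fS (D0/\<gamma>*(1 - (sp + dS* s)/(rS*(1-(s+r)/K)* s))) s r = sp" unfolding X_def .
qed

lemma glue:
  assumes s1: "solves D1 S1 R1 a b" and s2: "solves D2 S2 R2 b c"
    and eS: "S1 b = S2 b" and eR: "R1 b = R2 b" and ab: "a \<le> b" and bc: "b \<le> c"
  shows "solves (\<lambda>t. if t \<le> b then D1 t else D2 t) (\<lambda>t. if t \<le> b then S1 t else S2 t)
                (\<lambda>t. if t \<le> b then R1 t else R2 t) a c"
proof -
  let ?D = "\<lambda>t. if t \<le> b then D1 t else D2 t"
  let ?S = "\<lambda>t. if t \<le> b then S1 t else S2 t"
  let ?R = "\<lambda>t. if t \<le> b then R1 t else R2 t"
  have un: "{a..b} \<union> {b..c} = {a..c}" by (rule ivl_disj_un_two_touch(4)[OF ab bc])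
  have cont: "continuous_on {a..c} (\<lambda>t. if t \<le> b then F1 t else F2 t)"
    if c1: "continuous_on {a..b} F1" and c2: "continuous_on {b..c} F2" and e: "F1 b = F2 b"
    for F1 F2 :: "real \<Rightarrow> real"
  proof -
    have "continuous_on {a..b} (\<lambda>t. if t \<le> b then F1 t else F2 t)"
      using c1 by (rule continuous_on_eq) auto
    moreover have "continuous_on {b..c} (\<lambda>t. if t \<le> b then F1 t else F2 t)"
      using c2 by (rule continuous_on_eq) (use e in auto)
    ultimately have "continuous_on ({a..b} \<union> {b..c}) (\<lambda>t. if t \<le> b then F1 t else F2 t)"
      by (rule continuous_on_closed_Un[rotated 2]) auto
    then show ?thesis using un by simp
  qed
  have I: "((\<lambda>\<tau>. fS (?D \<tau>) (?S \<tau>) (?R \<tau>)) has_integral ?S t - ?S a) {a..t} \<and>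
           ((\<lambda>\<tau>. fR (?S \<tau>) (?R \<tau>)) has_integral ?R t - ?R a) {a..t}" if t: "t \<in> {a..c}" for t
  proof (cases "t \<le> b")
    case True
    then have ti: "t \<in> {a..b}" using t by auto
    have A: "((\<lambda>\<tau>. fS (D1 \<tau>) (S1 \<tau>) (R1 \<tau>)) has_integral S1 t - S1 a) {a..t}"
         "((\<lambda>\<tau>. fR (S1 \<tau>) (R1 \<tau>)) has_integral R1 t - R1 a) {a..t}"
      using s1 ti unfolding solves_def by auto
    have "((\<lambda>\<tau>. fS (?D \<tau>) (?S \<tau>) (?R \<tau>)) has_integral S1 t - S1 a) {a..t}"
      by (rule has_integral_spike_finite[OF _ _ A(1), of "{}"]) (use ti in auto)
    moreover have "((\<lambda>\<tau>. fR (?S \<tau>) (?R \<tau>)) has_integral R1 t - R1 a) {a..t}"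
      by (rule has_integral_spike_finite[OF _ _ A(2), of "{}"]) (use ti in auto)
    ultimately show ?thesis using True ab by simp
  next
    case False
    then have ti: "t \<in> {b..c}" using t by auto
    have A: "((\<lambda>\<tau>. fS (D1 \<tau>) (S1 \<tau>) (R1 \<tau>)) has_integral S1 b - S1 a) {a..b}"
         "((\<lambda>\<tau>. fR (S1 \<tau>) (R1 \<tau>)) has_integral R1 b - R1 a) {a..b}"
      using s1 ab unfolding solves_def by auto
    have B: "((\<lambda>\<tau>. fS (D2 \<tau>) (S2 \<tau>) (R2 \<tau>)) has_integral S2 t - S2 b) {b..t}"
         "((\<lambda>\<tau>. fR (S2 \<tau>) (R2 \<tau>)) has_integral R2 t - R2 b) {b..t}"
      using s2 ti unfolding solves_def by auto
    have A': "((\<lambda>\<tau>. fS (?D \<tau>) (?S \<tau>) (?R \<tau>)) has_integral S1 b - S1 a) {a..b}"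
             "((\<lambda>\<tau>. fR (?S \<tau>) (?R \<tau>)) has_integral R1 b - R1 a) {a..b}"
      by (rule has_integral_spike_finite[OF _ _ A(1), of "{}"] has_integral_spike_finite[OF _ _ A(2), of "{}"]; auto)+
    have B': "((\<lambda>\<tau>. fS (?D \<tau>) (?S \<tau>) (?R \<tau>)) has_integral S2 t - S2 b) {b..t}"
             "((\<lambda>\<tau>. fR (?S \<tau>) (?R \<tau>)) has_integral R2 t - R2 b) {b..t}"
      by (rule has_integral_spike_finite[OF _ _ B(1), of "{b}"] has_integral_spike_finite[OF _ _ B(2), of "{b}"]; auto)+
    have "((\<lambda>\<tau>. fS (?D \<tau>) (?S \<tau>) (?R \<tau>)) has_integral (S1 b - S1 a) + (S2 t - S2 b)) {a..t}"
      by (rule has_integral_combine[OF ab _ A'(1) B'(1)]) (use ti in auto)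
    moreover have "((\<lambda>\<tau>. fR (?S \<tau>) (?R \<tau>)) has_integral (R1 b - R1 a) + (R2 t - R2 b)) {a..t}"
      by (rule has_integral_combine[OF ab _ A'(2) B'(2)]) (use ti in auto)
    ultimately show ?thesis using False ab eS eR by (simp add: algebra_simps)
  qed
  show ?thesis
    unfolding solves_def
  proof (intro conjI ballI)
    show "continuous_on {a..c} ?S" using s1 s2 eS by (intro cont) (auto simp: solves_def)
    show "continuous_on {a..c} ?R" using s1 s2 eR by (intro cont) (auto simp: solves_def)
  next
    fix t assume "t \<in> {a..c}" then show "((\<lambda>\<tau>. fS (?D \<tau>) (?S \<tau>) (?R \<tau>)) has_integral ?S t - ?S a) {a..t}"
      using I by blast
  next
    fix t assume "t \<in> {a..c}" then show "((\<lambda>\<tau>. fR (?S \<tau>) (?R \<tau>)) has_integral ?R t - ?R a) {a..t}"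
      using I by blast
  next
    fix t assume "t \<in> {a..c}" then show "0 \<le> ?D t" "?D t \<le> Dmax"
      using s1 s2 unfolding solves_def by auto
  qed
qed

end

context tm begin

lemma restrict: "solves D S R a c \<Longrightarrow> a \<le> b \<Longrightarrow> b \<le> c \<Longrightarrow> solves D S R a b"
  unfolding solves_def by (auto elim: continuous_on_subset)

lemma piece:
  assumes bc: "b \<le> c"
    and dS2: "\<And>x. x \<in> {b..c} \<Longrightarrow> (S2 has_real_derivative S2' x) (at x within {b..c})"
    and dR2: "\<And>x. x \<in> {b..c} \<Longrightarrow> (R2 has_real_derivative fR (S2 x) (R2 x)) (at x within {b..c})"
    and pos: "\<And>x. x \<in> {b..c} \<Longrightarrow> S2 x > 0 \<and> S2 x + R2 x < K"
    and lo: "\<And>x. x \<in> {b..c} \<Longrightarrow> Fm (S2 x) (R2 x) \<le> S2' x + fR (S2 x) (R2 x)"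
    and hi: "\<And>x. x \<in> {b..c} \<Longrightarrow> S2' x + fR (S2 x) (R2 x) \<le> F0 (S2 x) (R2 x)"
  shows "solves (\<lambda>x. D0/\<gamma>*(1 - (S2' x + dS * S2 x)/(rS*(1-(S2 x+R2 x)/K) * S2 x))) S2 R2 b c"
proof -
  let ?D = "\<lambda>x. D0/\<gamma>*(1 - (S2' x + dS * S2 x)/(rS*(1-(S2 x+R2 x)/K) * S2 x))"
  have d: "0 \<le> ?D x" "?D x \<le> Dmax" "fS (?D x) (S2 x) (R2 x) = S2' x" if "x \<in> {b..c}" for x
    using dose[OF _ _ lo[OF that] hi[OF that]] pos[OF that] by auto
  have cS: "continuous_on {b..c} S2"
    using dS2 by (meson DERIV_continuous continuous_on_eq_continuous_within)
  have cR: "continuous_on {b..c} R2"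
    using dR2 by (meson DERIV_continuous continuous_on_eq_continuous_within)
  have I: "((\<lambda>\<tau>. fS (?D \<tau>) (S2 \<tau>) (R2 \<tau>)) has_integral S2 t - S2 b) {b..t} \<and>
           ((\<lambda>\<tau>. fR (S2 \<tau>) (R2 \<tau>)) has_integral R2 t - R2 b) {b..t}" if t: "t \<in> {b..c}" for t
  proof
    have sub: "{b..t} \<subseteq> {b..c}" using t by auto
    have "(S2' has_integral S2 t - S2 b) {b..t}"
    proof (rule fundamental_theorem_of_calculus)
      show "b \<le> t" using t by auto
      fix x assume x: "x \<in> {b..t}"
      show "(S2 has_vector_derivative S2' x) (at x within {b..t})"
        using DERIV_subset[OF dS2 sub] x sub has_real_derivative_iff_has_vector_derivative by blast
    qed
    note FT = this
    show "((\<lambda>\<tau>. fS (?D \<tau>) (S2 \<tau>) (R2 \<tau>)) has_integral S2 t - S2 b) {b..t}"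
      by (rule has_integral_spike_finite[OF finite.emptyI _ FT]) (use d sub in auto)
    have "((\<lambda>x. fR (S2 x) (R2 x)) has_integral R2 t - R2 b) {b..t}"
    proof (rule fundamental_theorem_of_calculus)
      show "b \<le> t" using t by auto
      fix x assume x: "x \<in> {b..t}"
      show "(R2 has_vector_derivative fR (S2 x) (R2 x)) (at x within {b..t})"
        using DERIV_subset[OF dR2 sub] x sub has_real_derivative_iff_has_vector_derivative by blast
    qed
    then show "((\<lambda>\<tau>. fR (S2 \<tau>) (R2 \<tau>)) has_integral R2 t - R2 b) {b..t}" .
  qed
  show ?thesis unfolding solves_def using cS cR I d by auto
qed

lemma solves_adm:
  assumes "admissible K rS rR dS dR \<gamma> \<epsilon> D0 0 Dmax s0 r0 D S R T"
  shows "solves D S R 0 T" "S 0 = s0 * K" "R 0 = r0 * K" "0 \<le> T"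
    "S T + R T = (1 + \<epsilon>) * (s0 + r0) * K" "\<forall>t\<in>{0..<T}. S t + R t < (1 + \<epsilon>) * (s0 + r0) * K"
proof -
  have A: "0 \<le> T" "\<forall>t\<in>{0..T}. 0 \<le> D t \<and> D t \<le> Dmax"
     "continuous_on {0..T} S" "continuous_on {0..T} R"
     "\<forall>t\<in>{0..T}. ((\<lambda>\<tau>. fS (D \<tau>) (S \<tau>) (R \<tau>)) has_integral (S t - s0 * K)) {0..t} \<and>
        ((\<lambda>\<tau>. fR (S \<tau>) (R \<tau>)) has_integral (R t - r0 * K)) {0..t}"
     "S T + R T = (1 + \<epsilon>) * (s0 + r0) * K" "\<forall>t\<in>{0..<T}. S t + R t < (1 + \<epsilon>) * (s0 + r0) * K"
    using assms unfolding admissible_def fS_def fR_def by auto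
  have "((\<lambda>\<tau>. fS (D \<tau>) (S \<tau>) (R \<tau>)) has_integral (S 0 - s0 * K)) {0..0}"
       "((\<lambda>\<tau>. fR (S \<tau>) (R \<tau>)) has_integral (R 0 - r0 * K)) {0..0}"
    using conjunct1[OF bspec[OF A(5), of 0]] conjunct2[OF bspec[OF A(5), of 0]] A(1) by auto
  moreover have "(f has_integral 0) {0..0::real}" for f :: "real \<Rightarrow> real"
    by (rule has_integral_null_real) simp
  ultimately have z: "S 0 - s0 * K = 0" "R 0 - r0 * K = 0"
    using has_integral_unique by blast+
  then show "S 0 = s0 * K" "R 0 = r0 * K" by auto
  show "solves D S R 0 T" unfolding solves_def using A z by auto
  show "0 \<le> T" "S T + R T = (1 + \<epsilon>) * (s0 + r0) * K" "\<forall>t\<in>{0..<T}. S t + R t < (1 + \<epsilon>) * (s0 + r0) * K"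
    using A by auto
qed

lemma adm_solves:
  assumes "solves D S R 0 T" "S 0 = s0 * K" "R 0 = r0 * K" "0 \<le> T"
    "S T + R T = (1 + \<epsilon>) * (s0 + r0) * K" "\<forall>t\<in>{0..<T}. S t + R t < (1 + \<epsilon>) * (s0 + r0) * K"
  shows "admissible K rS rR dS dR \<gamma> \<epsilon> D0 0 Dmax s0 r0 D S R T"
  using assms unfolding admissible_def solves_def fS_def fR_def by auto

end


lemma affine_bounds:
  fixes f :: "real \<Rightarrow> real"
  assumes aff: "\<And>r. f r = f 0 + r * (f 1 - f 0)" and r: "min p q \<le> r" "r \<le> max p q"
  shows "f r \<le> max (f p) (f q)" "min (f p) (f q) \<le> f r"
proof -
  define c where "c = f 1 - f 0"
  have e: "f x = f 0 + x * c" for x using aff[of x] unfolding c_def by linarith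
  have "r * c \<le> max (p * c) (q * c) \<and> min (p * c) (q * c) \<le> r * c"
  proof (cases "c \<ge> 0")
    case True
    have "min p q * c \<le> r * c" "r * c \<le> max p q * c"
      using r True by (simp_all add: mult_right_mono)
    moreover have "min p q * c = min (p * c) (q * c)" "max p q * c = max (p * c) (q * c)"
      using True by (simp_all add: min_mult_distrib_right max_mult_distrib_right)
    ultimately show ?thesis by simp
  next
    case False
    have "min p q * c \<ge> r * c" "r * c \<ge> max p q * c"
      using r False by (simp_all add: mult_right_mono_neg)
    moreover have "min p q * c = max (p * c) (q * c)" "max p q * c = min (p * c) (q * c)"
      using False by (simp_all add: min_mult_distrib_right max_mult_distrib_right)
    ultimately show ?thesis by simp
  qed
  then show "f r \<le> max (f p) (f q)" "min (f p) (f q) \<le> f r"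
    using e[of r] e[of p] e[of q] by (auto simp: max_def min_def)
qed

context tm begin

lemma F0_eq: "F0 s r = fS 0 s r + fR s r"
  by (simp add: F0_def fS_def fR_def rhsS_def rhsR_def)
lemma Fm_eq: "Fm s r = fS Dmax s r + fR s r"
  by (simp add: Fm_def fS_def fR_def rhsS_def rhsR_def)

lemma fS_le_max:
  assumes "0 \<le> D" "D \<le> Dmax"
  shows "fS D s r \<le> max (fS 0 s r) (fS Dmax s r)"
proof -
  define B where "B = rS*(1-(s+r)/K)*(\<gamma>/D0) * s"
  have e: "fS x s r = fS 0 s r - x * B" for x
    using K D0 by (simp add: fS_def rhsS_def B_def field_simps)
  show ?thesis
  proof (cases "B \<ge> 0")
    case True then have "D * B \<ge> 0" using assms by simp
    then show ?thesis unfolding e[of D] by (simp add: le_max_iff_disj)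
  next
    case False then have "- D * B \<le> - Dmax * B" using assms
      by (simp add: mult_right_mono_neg)
    then show ?thesis unfolding e[of D] e[of Dmax] by simp
  qed
qed

lemma fS_le0:
  assumes "0 \<le> D" "0 \<le> s" "s + r \<le> K"
  shows "fS D s r \<le> fS 0 s r"
proof -
  define B where "B = rS*(1-(s+r)/K)*(\<gamma>/D0) * s"
  have e: "fS x s r = fS 0 s r - x * B" for x
    using K D0 by (simp add: fS_def rhsS_def B_def field_simps)
  have "1-(s+r)/K \<ge> 0" using assms K by (simp add: field_simps)
  then have "B \<ge> 0" unfolding B_def using rS gam D0 assms by simp
  then show ?thesis unfolding e[of D] using assms by simp
qed

lemma N_int:
  assumes sol: "solves D S R 0 T" and ab: "0 \<le> a" "a \<le> b" "b \<le> T"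
    and G: "continuous_on {a..b} G"
    and le: "\<And>\<tau>. \<tau> \<in> {a..b} \<Longrightarrow> fS (D \<tau>) (S \<tau>) (R \<tau>) + fR (S \<tau>) (R \<tau>) \<le> G \<tau>"
  shows "S b + R b - (S a + R a) \<le> integral {a..b} G"
proof -
  have ia: "a \<in> {0..T}" and ib: "b \<in> {0..T}" using ab by auto
  have "((\<lambda>\<tau>. fS (D \<tau>) (S \<tau>) (R \<tau>)) has_integral S b - S a) {a..b}"
    by (rule subint[of _ S b "S 0" a]) (use sol ia ib ab in \<open>auto simp: solves_def\<close>)
  moreover have "((\<lambda>\<tau>. fR (S \<tau>) (R \<tau>)) has_integral R b - R a) {a..b}"
    by (rule subint[of _ R b "R 0" a]) (use sol ia ib ab in \<open>auto simp: solves_def\<close>)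
  ultimately have "((\<lambda>\<tau>. fS (D \<tau>) (S \<tau>) (R \<tau>) + fR (S \<tau>) (R \<tau>)) has_integral (S b - S a) + (R b - R a)) {a..b}"
    by (rule has_integral_add)
  moreover have "(G has_integral integral {a..b} G) {a..b}"
    using G integrable_continuous_real by (blast intro: integrable_integral)
  ultimately have "(S b - S a) + (R b - R a) \<le> integral {a..b} G"
    by (rule has_integral_le) (use le in auto)
  then show ?thesis by simp
qed

end


lemma prod_lb:
  fixes x y X Y :: real
  assumes "\<bar>x\<bar> \<le> X" "\<bar>y\<bar> \<le> Y"
  shows "- (X * Y) \<le> x * y"
proof -
  have "\<bar>x * y\<bar> \<le> X * Y" unfolding abs_mult
    by (rule mult_mono) (use assms in auto)
  then show ?thesis by (simp add: abs_le_iff)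
qed

context tm begin

lemma fS_lb:
  assumes "\<bar>s + r\<bar> \<le> B" "0 \<le> D" "D \<le> Dmax" "0 \<le> s"
  shows "- (rS*(1+B/K)*(1+\<gamma>*Dmax/D0) + dS) * s \<le> fS D s r"
proof -
  have a1: "\<bar>1 - (s+r)/K\<bar> \<le> 1 + B/K"
  proof -
    have "- B \<le> s + r" "s + r \<le> B" using assms(1) by (auto simp: abs_le_iff)
    then have "(- B)/K \<le> (s+r)/K" "(s+r)/K \<le> B/K" using K by (intro divide_right_mono; simp)+
    then show ?thesis by (simp add: abs_le_iff)
  qed
  have a2: "\<bar>1 - \<gamma>*D/D0\<bar> \<le> 1 + \<gamma>*Dmax/D0"
  proof -
    have "0 \<le> \<gamma>*D/D0" using assms gam D0 by simp
    moreover have "\<gamma>*D/D0 \<le> \<gamma>*Dmax/D0" using assms gam D0 by (simp add: divide_right_mono)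
    ultimately show ?thesis by (simp add: abs_le_iff)
  qed
  have "- ((1 + B/K) * (1 + \<gamma>*Dmax/D0)) \<le> (1 - (s+r)/K) * (1 - \<gamma>*D/D0)"
    by (rule prod_lb[OF a1 a2])
  then have "rS * (- ((1 + B/K) * (1 + \<gamma>*Dmax/D0))) \<le> rS * ((1 - (s+r)/K) * (1 - \<gamma>*D/D0))"
    by (rule mult_left_mono) (use rS in simp)
  then have "- (rS*(1+B/K)*(1+\<gamma>*Dmax/D0)) \<le> rS * (1 - (s+r)/K) * (1 - \<gamma>*D/D0)"
    by (simp only: mult.assoc mult_minus_right)
  then have "- (rS*(1+B/K)*(1+\<gamma>*Dmax/D0) + dS) * s \<le> (rS * (1 - (s+r)/K) * (1 - \<gamma>*D/D0) - dS) * s"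
    using assms(4) by (intro mult_right_mono) auto
  then show ?thesis by (simp add: fS_def rhsS_def algebra_simps)
qed

lemma fR_lb:
  assumes "\<bar>s + r\<bar> \<le> B" "0 \<le> r"
  shows "- (rR*(1+B/K) + dR) * r \<le> fR s r"
proof -
  have a1: "\<bar>1 - (s+r)/K\<bar> \<le> 1 + B/K"
  proof -
    have "- B \<le> s + r" "s + r \<le> B" using assms(1) by (auto simp: abs_le_iff)
    then have "(- B)/K \<le> (s+r)/K" "(s+r)/K \<le> B/K" using K by (intro divide_right_mono; simp)+
    then show ?thesis by (simp add: abs_le_iff)
  qed
  then have "- (1 + B/K) \<le> 1 - (s+r)/K" by (simp add: abs_le_iff)
  then have "rR * (- (1+B/K)) \<le> rR * (1 - (s+r)/K)"
    by (rule mult_left_mono) (use rR in simp)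
  then have "- (rR*(1+B/K)) \<le> rR * (1 - (s+r)/K)"
    by (simp only: mult_minus_right)
  then have "- (rR*(1+B/K) + dR) * r \<le> (rR * (1 - (s+r)/K) - dR) * r"
    using assms(2) by (intro mult_right_mono) auto
  then show ?thesis by (simp add: fR_def rhsR_def algebra_simps)
qed

end

context tm begin

lemma main:
  assumes adm: "admissible K rS rR dS dR \<gamma> \<epsilon> D0 0 Dmax s0 r0 Dst Sst Rst Ts"
    and opt: "\<And>D S R T. admissible K rS rR dS dR \<gamma> \<epsilon> D0 0 Dmax s0 r0 D S R T \<Longrightarrow> T \<le> Ts"
  shows "\<exists>T0. 0 \<le> T0 \<and> T0 < Ts \<and> (\<forall>t\<in>{T0..Ts}. rR * Rst t > (\<gamma> * Dmax / D0 - 1) * rS * Sst t)"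
proof (rule ccontr)
  assume neg: "\<not> ?thesis"
  define \<Theta> where "\<Theta> = (1 + \<epsilon>) * (s0 + r0) * K"
  define Db where "Db = \<gamma> * Dmax / D0 - 1"
  have Db0: "Db > 0" using Db Db_def by simp
  note A = solves_adm[OF adm]
  have sol: "solves Dst Sst Rst 0 Ts" and S0: "Sst 0 = s0 * K" and R0: "Rst 0 = r0 * K"
    and Ts0: "0 \<le> Ts" and endN: "Sst Ts + Rst Ts = \<Theta>"
    and below: "\<And>t. t \<in> {0..<Ts} \<Longrightarrow> Sst t + Rst t < \<Theta>"
    using A unfolding \<Theta>_def by auto
  have cS: "continuous_on {0..Ts} Sst" and cR: "continuous_on {0..Ts} Rst"
    and Dbd: "\<And>t. t \<in> {0..Ts} \<Longrightarrow> 0 \<le> Dst t \<and> Dst t \<le> Dmax"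
    and intS: "\<And>t. t \<in> {0..Ts} \<Longrightarrow> ((\<lambda>\<tau>. fS (Dst \<tau>) (Sst \<tau>) (Rst \<tau>)) has_integral Sst t - Sst 0) {0..t}"
    and intR: "\<And>t. t \<in> {0..Ts} \<Longrightarrow> ((\<lambda>\<tau>. fR (Sst \<tau>) (Rst \<tau>)) has_integral Rst t - Rst 0) {0..t}"
    using sol unfolding solves_def by auto
  have cN: "continuous_on {0..Ts} (\<lambda>t. Sst t + Rst t)" using cS cR by (intro continuous_intros)
  have n0pos: "(s0 + r0) * K > 0" using s0 r0 K by simp
  have n0\<Theta>: "(s0 + r0) * K < \<Theta>"
  proof -
    have "\<epsilon> * ((s0 + r0) * K) > 0" using n0pos eps by simp
    then show ?thesis unfolding \<Theta>_def by (simp add: algebra_simps)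
  qed
  have Tpos: "Ts > 0"
  proof (rule ccontr)
    assume "\<not> Ts > 0" then have "Ts = 0" using Ts0 by simp
    then have "Sst 0 + Rst 0 = \<Theta>" using endN by simp
    then show False using S0 R0 n0\<Theta> by (simp add: algebra_simps)
  qed
  obtain B where B: "\<And>t. t \<in> {0..Ts} \<Longrightarrow> \<bar>Sst t + Rst t\<bar> \<le> B"
  proof -
    have "continuous_on {0..Ts} (\<lambda>t. \<bar>Sst t + Rst t\<bar>)" using cS cR by (intro continuous_intros)
    from continuous_attains_sup[OF compact_Icc _ this] Ts0 obtain x where
      "x \<in> {0..Ts}" "\<And>y. y \<in> {0..Ts} \<Longrightarrow> \<bar>Sst y + Rst y\<bar> \<le> \<bar>Sst x + Rst x\<bar>" by auto
    then show ?thesis using that by blast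
  qed
  have Spos: "\<And>t. t \<in> {0..Ts} \<Longrightarrow> Sst t > 0"
  proof (rule pos_sol[OF cS _ intS _ _])
    show "0 < Sst 0" using S0 s0 K by simp
    fix \<tau> assume "\<tau> \<in> {0..Ts}" "0 \<le> Sst \<tau>"
    then show "- (rS*(1+B/K)*(1+\<gamma>*Dmax/D0) + dS) * Sst \<tau> \<le> fS (Dst \<tau>) (Sst \<tau>) (Rst \<tau>)"
      using fS_lb[OF B _ _ ] Dbd by blast
  next
    have "0 \<le> B" using B[of 0] Ts0 by (meson abs_ge_zero atLeastAtMost_iff order.trans order_refl)
    then show "0 \<le> rS*(1+B/K)*(1+\<gamma>*Dmax/D0) + dS"
      using rS K gam D0 Dmax dS by (simp add: add_nonneg_nonneg)
  qed
  have Rpos: "\<And>t. t \<in> {0..Ts} \<Longrightarrow> Rst t > 0"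
  proof (rule pos_sol[OF cR _ intR _ _])
    show "0 < Rst 0" using R0 r0 K by simp
    fix \<tau> assume "\<tau> \<in> {0..Ts}" "0 \<le> Rst \<tau>"
    then show "- (rR*(1+B/K) + dR) * Rst \<tau> \<le> fR (Sst \<tau>) (Rst \<tau>)"
      using fR_lb[OF B] by blast
  next
    have "0 \<le> B" using B[of 0] Ts0 by (meson abs_ge_zero atLeastAtMost_iff order.trans order_refl)
    then show "0 \<le> rR*(1+B/K) + dR"
      using rR K dR by simp
  qed
  have cF0: "continuous_on {0..Ts} (\<lambda>t. F0 (Sst t) (Rst t))"
    unfolding F0_def using cS cR K by (intro continuous_intros) auto
  have cFm: "continuous_on {0..Ts} (\<lambda>t. Fm (Sst t) (Rst t))"
    unfolding Fm_def using cS cR K by (intro continuous_intros) auto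
  have \<Theta>K: "\<Theta> < K"
  proof (rule ccontr)
    assume nK: "\<not> \<Theta> < K"
    have "(s0 + r0) * K < K" using n0 K by simp
    then have "Sst 0 + Rst 0 < K" using S0 R0 by (simp add: algebra_simps)
    from first_cross[OF cN this, of Ts] nK endN Ts0
    obtain tK where tK: "tK \<in> {0..Ts}" "Sst tK + Rst tK = K" "0 < tK"
      "\<And>t. t \<in> {0..<tK} \<Longrightarrow> Sst t + Rst t < K" by auto
    define G where "G t = max (F0 (Sst t) (Rst t)) (Fm (Sst t) (Rst t))" for t
    have cG: "continuous_on {0..Ts} G" unfolding G_def using cF0 cFm by (intro continuous_intros)
    have "G tK < 0"
    proof -
      have "F0 (Sst tK) (Rst tK) = - dS * Sst tK - dR * Rst tK" "Fm (Sst tK) (Rst tK) = - dS * Sst tK - dR * Rst tK"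
        unfolding F0_def Fm_def using tK K by simp_all
      moreover have "- dS * Sst tK - dR * Rst tK < 0"
      proof -
        have "dS * Sst tK > 0" "dR * Rst tK > 0" using Spos[OF tK(1)] Rpos[OF tK(1)] dS dR by simp_all
        then show ?thesis by simp
      qed
      ultimately show ?thesis unfolding G_def by simp
    qed
    then obtain c where c: "0 \<le> c" "c < tK" "\<And>t. t \<in> {c..tK} \<Longrightarrow> - G t > 0"
    proof -
      have "continuous_on {0..tK} (\<lambda>t. - G t)"
        by (intro continuous_intros, rule continuous_on_subset[OF cG]) (use tK in auto)
      from left_nbhd[OF this tK(3)] \<open>G tK < 0\<close> show ?thesis using that by auto
    qed
    have "Sst tK + Rst tK - (Sst c + Rst c) \<le> integral {c..tK} G"
    proof (rule N_int[OF sol c(1) less_imp_le[OF c(2)]])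
      show "tK \<le> Ts" using tK by simp
      show "continuous_on {c..tK} G" using cG c tK by (auto elim: continuous_on_subset)
      fix \<tau> assume \<tau>: "\<tau> \<in> {c..tK}"
      then have "\<tau> \<in> {0..Ts}" using c tK by auto
      then show "fS (Dst \<tau>) (Sst \<tau>) (Rst \<tau>) + fR (Sst \<tau>) (Rst \<tau>) \<le> G \<tau>"
        using fS_le_max[of "Dst \<tau>" "Sst \<tau>" "Rst \<tau>"] Dbd unfolding G_def F0_eq Fm_eq by auto
    qed
    also have "integral {c..tK} G \<le> integral {c..tK} (\<lambda>_. 0::real)"
    proof (rule integral_le)
      show "G integrable_on {c..tK}"
        by (rule integrable_continuous_real, rule continuous_on_subset[OF cG]) (use c tK in auto)
      show "(\<lambda>_. 0::real) integrable_on {c..tK}" by (rule integrable_0)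
      fix x assume "x \<in> {c..tK}" then show "G x \<le> 0" using c(3)[of x] by simp
    qed
    finally have "K \<le> Sst c + Rst c" using tK by simp
    moreover have "Sst c + Rst c < K" using tK(4)[of c] c by simp
    ultimately show False by simp
  qed
  have NleT: "\<And>t. t \<in> {0..Ts} \<Longrightarrow> Sst t + Rst t \<le> \<Theta>"
    using below endN by (metis atLeastAtMost_iff atLeastLessThan_iff less_eq_real_def)
  have fN_le: "\<And>\<tau>. \<tau> \<in> {0..Ts} \<Longrightarrow> fS (Dst \<tau>) (Sst \<tau>) (Rst \<tau>) + fR (Sst \<tau>) (Rst \<tau>) \<le> F0 (Sst \<tau>) (Rst \<tau>)"
  proof -
    fix \<tau> assume t: "\<tau> \<in> {0..Ts}"
    have "fS (Dst \<tau>) (Sst \<tau>) (Rst \<tau>) \<le> fS 0 (Sst \<tau>) (Rst \<tau>)"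
      by (rule fS_le0) (use Dbd[OF t] Spos[OF t] NleT[OF t] \<Theta>K in auto)
    then show "fS (Dst \<tau>) (Sst \<tau>) (Rst \<tau>) + fR (Sst \<tau>) (Rst \<tau>) \<le> F0 (Sst \<tau>) (Rst \<tau>)"
      unfolding F0_eq by simp
  qed

  define S1 where "S1 = Sst Ts"
  define R1 where "R1 = Rst Ts"
  have TsI: "Ts \<in> {0..Ts}" using Ts0 by simp
  have S1pos: "S1 > 0" using Spos[OF TsI] S1_def by simp
  have R1pos: "R1 > 0" using Rpos[OF TsI] R1_def by simp
  have sum1: "S1 + R1 = \<Theta>" using endN S1_def R1_def by simp
  have gle: "rR * R1 - Db * rS * S1 \<le> 0"
  proof (rule ccontr)
    assume "\<not> ?thesis"
    then have g0: "rR * Rst Ts - Db * rS * Sst Ts > 0" using S1_def R1_def by simp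
    have cg: "continuous_on {0..Ts} (\<lambda>t. rR * Rst t - Db * rS * Sst t)" using cS cR by (intro continuous_intros)
    from left_nbhd[OF cg Tpos] g0 obtain c where c: "0 \<le> c" "c < Ts" "\<And>t. t \<in> {c..Ts} \<Longrightarrow> rR * Rst t - Db * rS * Sst t > 0"
      by auto
    have "0 \<le> c \<and> c < Ts \<and> (\<forall>t\<in>{c..Ts}. rR * Rst t > (\<gamma> * Dmax / D0 - 1) * rS * Sst t)"
      using c unfolding Db_def by auto
    then show False using neg by blast
  qed
  have \<Theta>pos: "\<Theta> > 0" using n0\<Theta> n0pos by simp
  have kpos: "1 - \<Theta>/K > 0" using \<Theta>K K by (simp add: field_simps)
  have FmP: "Fm S1 R1 < 0"
  proof -
    have "Fm S1 R1 = rS*(1-\<Theta>/K)*(1 - \<gamma>*Dmax/D0) * S1 - dS * S1 + (rR*(1-\<Theta>/K)*R1 - dR*R1)"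
      unfolding Fm_def sum1 ..
    also have "\<dots> = (1 - \<Theta>/K) * (rR * R1 - Db * rS * S1) - dS * S1 - dR * R1"
      unfolding Db_def using K D0 by (simp add: field_simps)
    finally have e: "Fm S1 R1 = (1 - \<Theta>/K) * (rR * R1 - Db * rS * S1) - dS * S1 - dR * R1" .
    have "(1 - \<Theta>/K) * (rR * R1 - Db * rS * S1) \<le> 0" using kpos gle by (simp add: mult_nonneg_nonpos)
    moreover have "dS * S1 > 0" "dR * R1 > 0" using S1pos R1pos dS dR by simp_all
    ultimately show ?thesis unfolding e by linarith
  qed
  have KEY: "\<exists>t\<in>{c..<Ts}. F0 (Sst t) (Rst t) \<ge> 0" if c: "c \<in> {0..<Ts}" for c
  proof (rule ccontr)
    assume nn: "\<not> (\<exists>t\<in>{c..<Ts}. F0 (Sst t) (Rst t) \<ge> 0)"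
    have lt: "F0 (Sst t) (Rst t) < 0" if "t \<in> {c..<Ts}" for t
    proof -
      have "\<not> F0 (Sst t) (Rst t) \<ge> 0" using nn that by blast
      then show ?thesis by simp
    qed
    have cc: "continuous_on {c..Ts} (\<lambda>t. F0 (Sst t) (Rst t))" using cF0 c by (auto elim: continuous_on_subset)
    have atT: "F0 (Sst Ts) (Rst Ts) \<le> 0"
    proof (rule ccontr)
      assume "\<not> F0 (Sst Ts) (Rst Ts) \<le> 0"
      then have "F0 (Sst Ts) (Rst Ts) > 0" by simp
      from left_nbhd[OF cc _ this] c obtain c' where c': "c \<le> c'" "c' < Ts" "\<And>t. t \<in> {c'..Ts} \<Longrightarrow> F0 (Sst t) (Rst t) > 0"
        by auto
      have "F0 (Sst c') (Rst c') > 0" using c' by (intro c'(3)) auto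
      moreover have "F0 (Sst c') (Rst c') < 0" using c' by (intro lt) auto
      ultimately show False by simp
    qed
    have "Sst Ts + Rst Ts - (Sst c + Rst c) \<le> integral {c..Ts} (\<lambda>t. F0 (Sst t) (Rst t))"
      by (rule N_int[OF sol]) (use c fN_le cc in auto)
    also have "\<dots> \<le> integral {c..Ts} (\<lambda>_. 0::real)"
    proof (rule integral_le)
      show "(\<lambda>t. F0 (Sst t) (Rst t)) integrable_on {c..Ts}" by (rule integrable_continuous_real[OF cc])
      show "(\<lambda>_. 0::real) integrable_on {c..Ts}" by (rule integrable_0)
      fix x assume "x \<in> {c..Ts}" then show "F0 (Sst x) (Rst x) \<le> 0"
        using lt[of x] atT by (cases "x = Ts") auto
    qed
    finally have "\<Theta> \<le> Sst c + Rst c" using endN by simp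
    then show False using below[of c] c by auto
  qed
  have F0P: "F0 S1 R1 \<ge> 0"
  proof (rule ccontr)
    assume "\<not> ?thesis"
    then have "- F0 (Sst Ts) (Rst Ts) > 0" using S1_def R1_def by simp
    moreover have "continuous_on {0..Ts} (\<lambda>t. - F0 (Sst t) (Rst t))" using cF0 by (intro continuous_intros)
    ultimately obtain c where c: "0 \<le> c" "c < Ts" "\<And>t. t \<in> {c..Ts} \<Longrightarrow> - F0 (Sst t) (Rst t) > 0"
      using left_nbhd[of 0 Ts "\<lambda>t. - F0 (Sst t) (Rst t)"] Tpos by auto
    from KEY[of c] c obtain t where t: "t \<in> {c..<Ts}" "F0 (Sst t) (Rst t) \<ge> 0" by auto
    have "- F0 (Sst t) (Rst t) > 0" using t by (intro c(3)) auto
    then show False using t by simp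
  qed
  define a where "a = rR*(1-\<Theta>/K) - dR"
  define b where "b = rS*(1-\<Theta>/K) - dS"
  have nondeg: "\<not> (a = 0 \<and> b = 0)"
  proof
    assume ab: "a = 0 \<and> b = 0"
    define u where "u t = \<Theta> - (Sst t + Rst t)" for t
    have cu: "continuous_on {0..Ts} u" unfolding u_def using cS cR by (intro continuous_intros)
    obtain Mk where Mk: "\<And>t. t \<in> {0..Ts} \<Longrightarrow> (rS * Sst t + rR * Rst t)/K \<le> Mk"
    proof -
      have "continuous_on {0..Ts} (\<lambda>t. (rS * Sst t + rR * Rst t)/K)" using cS cR K by (intro continuous_intros) auto
      from continuous_attains_sup[OF compact_Icc _ this] Ts0 obtain x where
        "x \<in> {0..Ts}" "\<And>y. y \<in> {0..Ts} \<Longrightarrow> (rS * Sst y + rR * Rst y)/K \<le> (rS * Sst x + rR * Rst x)/K" by auto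
      then show ?thesis using that by blast
    qed
    have Mk0: "0 \<le> Mk"
    proof -
      have "0 \<le> (rS * Sst 0 + rR * Rst 0)/K" using Spos[of 0] Rpos[of 0] Ts0 rS rR K by simp
      then show ?thesis using Mk[of 0] Ts0 by simp
    qed
    have dSe: "dS = rS*(1-\<Theta>/K)" and dRe: "dR = rR*(1-\<Theta>/K)" using ab a_def b_def by auto
    have F0u: "F0 (Sst t) (Rst t) = (rS * Sst t + rR * Rst t)/K * u t" for t
      unfolding F0_def u_def using K by (simp add: dSe dRe field_simps)
    have unn: "0 \<le> u t" if "t \<in> {0..Ts}" for t using NleT[OF that] u_def by simp
    have "u t = 0" if "t \<in> {0..Ts}" for t
    proof (rule gronwall_back[OF Ts0 cu unn Mk0 _ that])
      fix t assume t: "t \<in> {0..Ts}"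
      then have ts: "{t..Ts} \<subseteq> {0..Ts}" by auto
      have "u t = Sst Ts + Rst Ts - (Sst t + Rst t)" using endN u_def by simp
      also have "\<dots> \<le> integral {t..Ts} (\<lambda>x. F0 (Sst x) (Rst x))"
        by (rule N_int[OF sol]) (use t fN_le in \<open>auto intro: continuous_on_subset[OF cF0 ts]\<close>)
      also have "\<dots> \<le> integral {t..Ts} (\<lambda>x. Mk * u x)"
      proof (rule integral_le)
        show "(\<lambda>x. F0 (Sst x) (Rst x)) integrable_on {t..Ts}"
          by (rule integrable_continuous_real, rule continuous_on_subset[OF cF0 ts])
        show "(\<lambda>x. Mk * u x) integrable_on {t..Ts}"
          by (rule integrable_continuous_real, intro continuous_intros, rule continuous_on_subset[OF cu ts])
        fix x assume x: "x \<in> {t..Ts}"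
        then have "x \<in> {0..Ts}" using ts by auto
        then show "F0 (Sst x) (Rst x) \<le> Mk * u x"
          unfolding F0u using mult_right_mono[OF Mk unn] by blast
      qed
      also have "\<dots> = Mk * integral {t..Ts} u" by simp
      finally show "u t \<le> Mk * integral {t..Ts} u" .
    qed
    then have "u 0 = 0" using Ts0 by simp
    then show False using S0 R0 n0\<Theta> u_def by (simp add: algebra_simps)
  qed

  define bm where "bm = rS*(1-\<Theta>/K)*(1 - \<gamma>*Dmax/D0) - dS"
  have F0lin: "F0 (\<Theta> - r) r = b * (\<Theta> - r) + a * r" for r
    unfolding F0_def a_def b_def by (simp add: algebra_simps)
  have Fmlin: "Fm (\<Theta> - r) r = bm * (\<Theta> - r) + a * r" for r
    unfolding Fm_def a_def bm_def by (simp add: algebra_simps)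
  have S1e: "S1 = \<Theta> - R1" using sum1 by simp
  define q where "q \<tau> = R1 * exp (a * \<tau>)" for \<tau>
  have q0: "q 0 = R1" unfolding q_def by simp
  have F0Q: "F0 (\<Theta> - q \<tau>) (q \<tau>) = F0 S1 R1 + (a - b) * (q \<tau> - R1)" for \<tau>
    unfolding S1e F0lin by (simp add: algebra_simps)
  obtain d1 where d1: "d1 > 0" "\<And>\<tau>. \<bar>\<tau> - 0\<bar> < d1 \<Longrightarrow> 0 < min (- Fm (\<Theta> - q \<tau>) (q \<tau>)) (\<Theta> - q \<tau>)"
  proof -
    have "isCont (\<lambda>\<tau>. min (- Fm (\<Theta> - q \<tau>) (q \<tau>)) (\<Theta> - q \<tau>)) 0"
      unfolding Fmlin q_def by (intro continuous_intros)
    moreover have "0 < min (- Fm (\<Theta> - q 0) (q 0)) (\<Theta> - q 0)"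
      using FmP S1pos unfolding q0 S1e by simp
    ultimately show ?thesis using isCont_pos_nbhd that by blast
  qed
  obtain \<tau>0 where \<tau>0: "\<tau>0 > 0" "Fm (\<Theta> - q \<tau>0) (q \<tau>0) < 0" "\<Theta> - q \<tau>0 > 0" "F0 (\<Theta> - q \<tau>0) (q \<tau>0) > 0"
  proof (cases "F0 S1 R1 > 0")
    case True
    obtain d2 where d2: "d2 > 0" "\<And>\<tau>. \<bar>\<tau> - 0\<bar> < d2 \<Longrightarrow> 0 < F0 (\<Theta> - q \<tau>) (q \<tau>)"
    proof -
      have "isCont (\<lambda>\<tau>. F0 (\<Theta> - q \<tau>) (q \<tau>)) 0"
        unfolding F0lin q_def by (intro continuous_intros)
      moreover have "0 < F0 (\<Theta> - q 0) (q 0)" using True unfolding q0 S1e by simp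
      ultimately show ?thesis using isCont_pos_nbhd that by blast
    qed
    define \<tau>1 where "\<tau>1 = min d1 d2 / 2"
    have "\<tau>1 > 0" "\<bar>\<tau>1 - 0\<bar> < d1" "\<bar>\<tau>1 - 0\<bar> < d2" using d1 d2 unfolding \<tau>1_def by auto
    then show ?thesis using that d1(2)[of \<tau>1] d2(2)[of \<tau>1] by auto
  next
    case False
    then have F00: "F0 S1 R1 = 0" using F0P by simp
    then have bS: "b * S1 + a * R1 = 0" using F0lin[of R1] S1e by simp
    have an: "a \<noteq> 0"
    proof
      assume "a = 0"
      then have "b * S1 = 0" using bS by simp
      then have "b = 0" using S1pos by simp
      then show False using nondeg \<open>a = 0\<close> by simp
    qed
    define \<tau>1 where "\<tau>1 = d1 / 2"
    have t1: "\<tau>1 > 0" "\<bar>\<tau>1 - 0\<bar> < d1" using d1 unfolding \<tau>1_def by auto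
    have bval: "b = - a * R1 / S1" using bS S1pos by (simp add: field_simps)
    have ae: "a * (exp (a * \<tau>1) - 1) > 0"
    proof (cases "a > 0")
      case True then have "exp (a * \<tau>1) > 1" using t1 by simp
      then show ?thesis using True by simp
    next
      case False then have "a < 0" using an by simp
      then have "exp (a * \<tau>1) < 1" using t1 by (simp add: mult_neg_pos)
      then show ?thesis using \<open>a < 0\<close> by (simp add: mult_neg_neg)
    qed
    have "(a - b) * (q \<tau>1 - R1) = (a * (exp (a * \<tau>1) - 1)) * (R1 * (S1 + R1) / S1)"
      unfolding bval q_def using S1pos by (simp add: field_simps)
    also have "\<dots> > 0" using ae R1pos S1pos by simp
    finally have "F0 (\<Theta> - q \<tau>1) (q \<tau>1) > 0" unfolding F0Q F00 by simp
    then show ?thesis using that t1 d1(2)[of \<tau>1] by auto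
  qed

  define \<sigma> where "\<sigma> = F0 (\<Theta> - q \<tau>0) (q \<tau>0) / 2"
  have \<sigma>pos: "\<sigma> > 0" using \<tau>0 \<sigma>_def by simp
  define Lf where "Lf t = Sst t + Rst t" for t
  define aLf where "aLf t = rR*(1 - Lf t/K) - dR" for t
  define Rhf where "Rhf t = Rst t * exp (aLf t * \<tau>0)" for t
  define \<rho>f where "\<rho>f t = (\<Theta> - Lf t)/\<sigma>" for t
  define rRf where "rRf t s = Rhf t * exp (aLf t * (\<rho>f t * s) - rR*\<sigma>*(\<rho>f t * s)^2/(2*K))" for t s
  define rSf where "rSf t s = Lf t + \<sigma> * (\<rho>f t * s) - rRf t s" for t s
  define H where "H p = min (min (min (F0 (rSf (fst p) (snd p)) (rRf (fst p) (snd p)) - \<sigma>)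
         (\<sigma> - Fm (rSf (fst p) (snd p)) (rRf (fst p) (snd p)))) (rSf (fst p) (snd p)))
      (min (min (- Fm (Sst (fst p)) (Rst (fst p))) (- Fm (Lf (fst p) - Rhf (fst p)) (Rhf (fst p))))
        (min (min (Sst (fst p)) (Lf (fst p) - Rhf (fst p)))
          (min (F0 (Lf (fst p) - Rhf (fst p)) (Rhf (fst p))) (fst p - (Ts - \<tau>0)))))" for p
  have cSf: "continuous_on ({0..Ts} \<times> {0..1}) (\<lambda>p. Sst (fst p))"
    by (rule continuous_on_compose2[OF cS continuous_on_fst]) auto
  have cRf: "continuous_on ({0..Ts} \<times> {0..1}) (\<lambda>p. Rst (fst p))"
    by (rule continuous_on_compose2[OF cR continuous_on_fst]) auto
  have cH: "continuous_on ({0..Ts} \<times> {0..1}) H"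
    unfolding H_def rSf_def rRf_def \<rho>f_def Rhf_def aLf_def Lf_def F0_def Fm_def
    using cSf cRf K \<sigma>pos by (intro continuous_intros) auto
  have LTs: "Lf Ts = \<Theta>" using endN Lf_def by simp
  have aTs: "aLf Ts = a" unfolding aLf_def LTs a_def ..
  have RhTs: "Rhf Ts = q \<tau>0" unfolding Rhf_def aTs q_def R1_def by simp
  have rhoTs: "\<rho>f Ts = 0" unfolding \<rho>f_def LTs by simp
  have rRTs: "rRf Ts s = q \<tau>0" for s unfolding rRf_def rhoTs RhTs by simp
  have rSTs: "rSf Ts s = \<Theta> - q \<tau>0" for s unfolding rSf_def rRTs rhoTs LTs by simp
  have HTs: "H (Ts, s) > 0" if "s \<in> {0..1}" for s
    unfolding H_def fst_conv snd_conv rRTs rSTs LTs RhTs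
    using \<tau>0 \<sigma>pos \<sigma>_def FmP S1pos S1_def R1_def by simp
  obtain c where c: "0 \<le> c" "c < Ts" "\<And>t s. t \<in> {c..Ts} \<Longrightarrow> s \<in> {0..1} \<Longrightarrow> H (t, s) > 0"
    using tube_lemma[OF cH Tpos] HTs by blast
  obtain t1 where t1: "t1 \<in> {c..<Ts}" "F0 (Sst t1) (Rst t1) \<ge> 0" using KEY[of c] c by auto
  have t1I: "t1 \<in> {0..Ts}" using t1 c by auto
  have Ht1: "H (t1, s) > 0" if "s \<in> {0..1}" for s using c(3)[of t1 s] t1 that by auto
  have h0: "- Fm (Sst t1) (Rst t1) > 0" "- Fm (Lf t1 - Rhf t1) (Rhf t1) > 0" "Sst t1 > 0" "Lf t1 - Rhf t1 > 0"
     "F0 (Lf t1 - Rhf t1) (Rhf t1) > 0" "t1 - (Ts - \<tau>0) > 0"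
    using Ht1[of 0] unfolding H_def by auto
  have hs: "F0 (rSf t1 s) (rRf t1 s) > \<sigma>" "Fm (rSf t1 s) (rRf t1 s) < \<sigma>" "rSf t1 s > 0" if "s \<in> {0..1}" for s
    using Ht1[OF that] unfolding H_def by auto

  define L where "L = Lf t1"
  define aL where "aL = aLf t1"
  define Rs where "Rs = Rst t1"
  define Rh where "Rh = Rhf t1"
  define \<rho> where "\<rho> = \<rho>f t1"
  define t2 where "t2 = t1 + \<tau>0"
  define Tp where "Tp = t2 + \<rho>"
  have Lless: "L < \<Theta>" using below[of t1] t1 c unfolding L_def Lf_def by auto
  have LK: "L < K" using Lless \<Theta>K by simp
  have \<rho>pos: "\<rho> > 0" unfolding \<rho>_def \<rho>f_def using Lless \<sigma>pos L_def by simp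
  have \<sigma>\<rho>: "\<sigma> * \<rho> = \<Theta> - L" unfolding \<rho>_def \<rho>f_def L_def using \<sigma>pos by simp
  have Rspos: "Rs > 0" using Rpos[OF t1I] Rs_def by simp
  have Rh_eq: "Rh = Rs * exp (aL * \<tau>0)" unfolding Rh_def Rhf_def Rs_def aL_def ..
  have SsL: "Sst t1 = L - Rs" unfolding L_def Lf_def Rs_def by simp
  have t12: "t1 \<le> t2" using \<tau>0 t2_def by simp
  have t2Tp: "t2 < Tp" using \<rho>pos Tp_def by simp
  have TpTs: "Tp > Ts" using h0(6) t2_def Tp_def \<rho>pos by simp
  define R2 where "R2 x = Rs * exp (aL * (x - t1))" for x
  define S2 where "S2 x = L - R2 x" for x
  define S2' where "S2' x = - (aL * R2 x)" for x
  have fR2: "fR (S2 x) (R2 x) = aL * R2 x" for x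
    unfolding fR_eq S2_def aL_def aLf_def L_def by (simp add: algebra_simps)
  have betw: "min Rs Rh \<le> R2 x \<and> R2 x \<le> max Rs Rh" if x: "x \<in> {t1..t2}" for x
  proof -
    have u: "0 \<le> x - t1" "x - t1 \<le> \<tau>0" using x t2_def by auto
    show ?thesis
    proof (cases "aL \<ge> 0")
      case True
      then have "aL * 0 \<le> aL * (x - t1)" "aL * (x - t1) \<le> aL * \<tau>0" using u by (intro mult_left_mono; simp)+
      then have "1 \<le> exp (aL * (x - t1))" "exp (aL * (x - t1)) \<le> exp (aL * \<tau>0)" by simp_all
      then have "Rs \<le> R2 x" "R2 x \<le> Rh" unfolding R2_def Rh_eq using Rspos by simp_all
      then show ?thesis by simp
    next
      case False
      then have "aL * (x - t1) \<le> aL * 0" "aL * \<tau>0 \<le> aL * (x - t1)" using u by (intro mult_left_mono_neg; simp)+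
      then have "exp (aL * (x - t1)) \<le> 1" "exp (aL * \<tau>0) \<le> exp (aL * (x - t1))" by simp_all
      then have "R2 x \<le> Rs" "Rh \<le> R2 x" unfolding R2_def Rh_eq using Rspos by simp_all
      then show ?thesis by simp
    qed
  qed
  have affFm: "Fm (L - r) r = Fm (L - 0) 0 + r * (Fm (L - 1) 1 - Fm (L - 0) 0)" for r
    unfolding Fm_def using K D0 by (simp add: field_simps)
  have affF0: "F0 (L - r) r = F0 (L - 0) 0 + r * (F0 (L - 1) 1 - F0 (L - 0) 0)" for r
    unfolding F0_def using K by (simp add: field_simps)
  have affS: "(\<lambda>r. L - r) r = (\<lambda>r. L - r) 0 + r * ((\<lambda>r. L - r) 1 - (\<lambda>r. L - r) 0)" for r
    by simp
  have endS: "Fm (L - Rs) Rs < 0" "Fm (L - Rh) Rh < 0" "F0 (L - Rs) Rs \<ge> 0" "F0 (L - Rh) Rh > 0"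
    "L - Rs > 0" "L - Rh > 0"
    using h0 t1(2) SsL unfolding L_def Rs_def Rh_def by auto
  define D2 where "D2 x = D0/\<gamma>*(1 - (S2' x + dS * S2 x)/(rS*(1-(S2 x+R2 x)/K) * S2 x))" for x
  have solH: "solves D2 S2 R2 t1 t2"
    unfolding D2_def
  proof (rule piece[OF t12])
    fix x assume x: "x \<in> {t1..t2}"
    show "(S2 has_real_derivative S2' x) (at x within {t1..t2})"
      unfolding S2_def S2'_def R2_def by (auto intro!: derivative_eq_intros simp: algebra_simps)
    show "(R2 has_real_derivative fR (S2 x) (R2 x)) (at x within {t1..t2})"
      unfolding fR2 unfolding R2_def by (auto intro!: derivative_eq_intros simp: algebra_simps)
    have b: "min Rs Rh \<le> R2 x" "R2 x \<le> max Rs Rh" using betw[OF x] by auto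
    have "min (L - Rs) (L - Rh) \<le> L - R2 x"
      using affine_bounds(2)[of "\<lambda>r. L - r", OF _ b] by simp
    then show "S2 x > 0 \<and> S2 x + R2 x < K" unfolding S2_def using endS LK by simp
    have "Fm (L - R2 x) (R2 x) \<le> max (Fm (L - Rs) Rs) (Fm (L - Rh) Rh)"
      by (rule affine_bounds(1)[of "\<lambda>r. Fm (L - r) r", OF affFm b])
    moreover have z: "S2' x + fR (S2 x) (R2 x) = 0" by (simp add: S2'_def fR2)
    ultimately show "Fm (S2 x) (R2 x) \<le> S2' x + fR (S2 x) (R2 x)"
      unfolding z unfolding S2_def using endS by simp
    have "min (F0 (L - Rs) Rs) (F0 (L - Rh) Rh) \<le> F0 (L - R2 x) (R2 x)"
      by (rule affine_bounds(2)[of "\<lambda>r. F0 (L - r) r", OF affF0 b])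
    then show "S2' x + fR (S2 x) (R2 x) \<le> F0 (S2 x) (R2 x)"
      unfolding z unfolding S2_def using endS by simp
  qed

  define R3 where "R3 x = Rh * exp (aL * (x - t2) - rR*\<sigma>*(x - t2)^2/(2*K))" for x
  define S3 where "S3 x = L + \<sigma>*(x - t2) - R3 x" for x
  define S3' where "S3' x = \<sigma> - R3 x * (aL - rR*\<sigma>*(x - t2)/K)" for x
  have fR3: "fR (S3 x) (R3 x) = R3 x * (aL - rR*\<sigma>*(x - t2)/K)" for x
    unfolding fR_eq S3_def aL_def aLf_def L_def using K by (simp add: field_simps)
  have rel: "rRf t1 ((x - t2)/\<rho>) = R3 x \<and> rSf t1 ((x - t2)/\<rho>) = S3 x" for x
  proof -
    have e: "\<rho>f t1 * ((x - t2)/\<rho>) = x - t2" using \<rho>pos \<rho>_def by simp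
    show ?thesis unfolding rRf_def rSf_def e R3_def S3_def
      by (simp add: Rh_def aL_def L_def)
  qed
  have sI: "(x - t2)/\<rho> \<in> {0..1}" if "x \<in> {t2..Tp}" for x
    using that \<rho>pos Tp_def by (auto simp: field_simps)
  define D3 where "D3 x = D0/\<gamma>*(1 - (S3' x + dS * S3 x)/(rS*(1-(S3 x+R3 x)/K) * S3 x))" for x
  have solR: "solves D3 S3 R3 t2 Tp"
    unfolding D3_def
  proof (rule piece[OF less_imp_le[OF t2Tp]])
    fix x assume x: "x \<in> {t2..Tp}"
    have d: "(R3 has_real_derivative R3 x * (aL - rR*\<sigma>*(x - t2)/K)) (at x within {t2..Tp})"
      unfolding R3_def using K by (auto intro!: derivative_eq_intros simp: field_simps)
    then show "(R3 has_real_derivative fR (S3 x) (R3 x)) (at x within {t2..Tp})" unfolding fR3 .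
    show "(S3 has_real_derivative S3' x) (at x within {t2..Tp})"
      unfolding S3_def S3'_def by (auto intro!: derivative_eq_intros d simp: algebra_simps)
    have z: "S3' x + fR (S3 x) (R3 x) = \<sigma>" by (simp add: S3'_def fR3)
    have hx: "F0 (S3 x) (R3 x) > \<sigma>" "Fm (S3 x) (R3 x) < \<sigma>" "S3 x > 0"
      using hs[OF sI[OF x]] rel[of x] by auto
    have "S3 x + R3 x \<le> \<Theta>"
    proof -
      have "\<sigma> * (x - t2) \<le> \<sigma> * \<rho>" using x Tp_def \<sigma>pos by (intro mult_left_mono) auto
      then show ?thesis unfolding S3_def using \<sigma>\<rho> by simp
    qed
    then show "S3 x > 0 \<and> S3 x + R3 x < K" using hx \<Theta>K by simp
    show "Fm (S3 x) (R3 x) \<le> S3' x + fR (S3 x) (R3 x)" unfolding z using hx by simp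
    show "S3' x + fR (S3 x) (R3 x) \<le> F0 (S3 x) (R3 x)" unfolding z using hx by simp
  qed
  have sol1: "solves Dst Sst Rst 0 t1" by (rule restrict[OF sol]) (use t1I in auto)
  define Dg where "Dg t = (if t \<le> t1 then Dst t else D2 t)" for t
  define Sg where "Sg t = (if t \<le> t1 then Sst t else S2 t)" for t
  define Rg where "Rg t = (if t \<le> t1 then Rst t else R2 t)" for t
  have solg: "solves Dg Sg Rg 0 t2"
    unfolding Dg_def Sg_def Rg_def
    by (rule glue[OF sol1 solH]) (use t1I t12 in \<open>simp_all add: S2_def R2_def SsL Rs_def\<close>)
  define Df where "Df t = (if t \<le> t2 then Dg t else D3 t)" for t
  define Sf where "Sf t = (if t \<le> t2 then Sg t else S3 t)" for t
  define Rf where "Rf t = (if t \<le> t2 then Rg t else R3 t)" for t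
  have Sgt2: "Sg t2 = L - Rh" "Rg t2 = Rh"
    using \<tau>0 unfolding Sg_def Rg_def S2_def R2_def t2_def Rh_eq by simp_all
  have solf: "solves Df Sf Rf 0 Tp"
    unfolding Df_def Sf_def Rf_def
    by (rule glue[OF solg solR]) (use t1I t12 t2Tp in \<open>simp_all add: Sgt2 S3_def R3_def\<close>)
  have "admissible K rS rR dS dR \<gamma> \<epsilon> D0 0 Dmax s0 r0 Df Sf Rf Tp"
  proof (rule adm_solves[OF solf])
    have "0 \<le> t1" "0 \<le> t2" using t1I t12 by auto
    then show "Sf 0 = s0 * K" "Rf 0 = r0 * K" unfolding Sf_def Rf_def Sg_def Rg_def using S0 R0 by simp_all
    show "0 \<le> Tp" using t2Tp \<open>0 \<le> t2\<close> by simp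
    have "Sf Tp + Rf Tp = L + \<sigma> * (Tp - t2)" unfolding Sf_def Rf_def S3_def using t2Tp by simp
    also have "\<dots> = \<Theta>" using \<sigma>\<rho> Tp_def by simp
    finally show "Sf Tp + Rf Tp = (1 + \<epsilon>) * (s0 + r0) * K" unfolding \<Theta>_def .
    show "\<forall>t\<in>{0..<Tp}. Sf t + Rf t < (1 + \<epsilon>) * (s0 + r0) * K"
    proof
      fix t assume t: "t \<in> {0..<Tp}"
      have "Sf t + Rf t < \<Theta>"
      proof (cases "t \<le> t2")
        case True
        show ?thesis
        proof (cases "t \<le> t1")
          case True2: True
          then have "t \<in> {0..<Ts}" using t t1 by auto
          then show ?thesis using below True True2 unfolding Sf_def Rf_def Sg_def Rg_def by simp
        next
          case False
          then show ?thesis using True Lless unfolding Sf_def Rf_def Sg_def Rg_def S2_def by simp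
        qed
      next
        case False
        have "\<sigma> * (t - t2) < \<sigma> * \<rho>" using t Tp_def \<sigma>pos by simp
        then show ?thesis using False \<sigma>\<rho> unfolding Sf_def Rf_def S3_def by simp
      qed
      then show "Sf t + Rf t < (1 + \<epsilon>) * (s0 + r0) * K" unfolding \<Theta>_def .
    qed
  qed
  then have "Tp \<le> Ts" by (rule opt)
  then show False using TpTs by simp
qed
end

theorem lemma3p4:
  fixes K rS rR dS dR \<gamma> \<epsilon> D0 Dmin Dmax s0 r0 Tstar :: real
    and Dstar Sstar Rstar :: "real \<Rightarrow> real"
  assumes "K > 0" "rS > 0" "rR > 0" "dS > 0" "dR > 0"
    and "\<gamma> > 1" "0 < \<epsilon>" "\<epsilon> \<le> 0.5" "D0 > 0"
    and "Dmin = 0" "Dmin \<le> Dmax" "Dmax \<le> D0"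
    and "\<gamma> * Dmax / D0 - 1 > 0"
    and "s0 > 0" "r0 > 0" "s0 + r0 < 1"
    and "rhsS K rS dS \<gamma> D0 0 (s0 * K) (r0 * K) > 0"
    and "rhsR K rR dR (s0 * K) (r0 * K) > 0"
    and opt_adm: "admissible K rS rR dS dR \<gamma> \<epsilon> D0 Dmin Dmax s0 r0 Dstar Sstar Rstar Tstar"
    and opt_max: "\<And>D S R T. admissible K rS rR dS dR \<gamma> \<epsilon> D0 Dmin Dmax s0 r0 D S R T \<Longrightarrow> T \<le> Tstar"
    and pwc: "piecewise_constant_on Tstar Dstar"
  shows "\<exists>T0. 0 \<le> T0 \<and> T0 < Tstar \<and>
           (\<forall>t\<in>{T0..Tstar}. rR * Rstar t > (\<gamma> * Dmax / D0 - 1) * rS * Sstar t)"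
proof -
  interpret tm K rS rR dS dR \<gamma> \<epsilon> D0 Dmax s0 r0
    by unfold_locales (use assms in auto)
  have adm: "admissible K rS rR dS dR \<gamma> \<epsilon> D0 0 Dmax s0 r0 Dstar Sstar Rstar Tstar"
    using opt_adm assms(10) by simp
  have opt: "\<And>D S R T. admissible K rS rR dS dR \<gamma> \<epsilon> D0 0 Dmax s0 r0 D S R T \<Longrightarrow> T \<le> Tstar"
    using opt_max assms(10) by simp
  show ?thesis by (rule main[OF adm opt])
qed

end
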